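(* Let $G$ be a finite abelian group of order $mn$, let $N \le G$ be a subgroup of order $n$, and let $D \subseteq G$ be a semiregular $(m,n,k,\lambda_1,\lambda_2)$-divisible difference set in $G$ relative to $N$. Let $\{\eta_j\}_{j=1}^m$ be an enumeration of $N^\perp$, let $\{\chi_i\}_{i=1}^n$ be a set of coset representatives of $\widehat{G}/N^\perp$, and for $1\le i\le n$, $1\le j\le m$ let $e^i_j := \frac{1}{\sqrt{k}}((\chi_i\eta_j)(g))_{g\in D}\in\mathbb{C}^k$ and $\mathcal{W}_i=\operatorname{span}\{e^i_j\}_{j=1}^m$. Let $\{h_\ell\}_{\ell=1}^m$ be a set of coset representatives of $G/N$ and define the $m\times m$ matrix \[ U=\frac{1}{\sqrt{m}}\big(\eta_j(h_\ell)\big)_{\ell,j=1}^m \] (row index $\ell$, column index $j$). For each $i$ define $\tilde L_i=(\tilde e^i_1|\cdots|\tilde e^i_m):=(e^i_1|\cdots|e^i_m)\,U^*$. Then for all $i\in\{1,\dots,n\}$, $\mathcal{W}_i=\operatorname{span}\{\tilde e^i_j\}_{j=1}^m$, the vectors $\{\tilde e^i_j\}_{j=1,i=1}^{m,n}$ are almost flat, and each vector $\tilde e^i_j$ has exactly $k/m$ nonzero coordinates.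
   Context: $\widehat{G}$ is the group of characters (homomorphisms $G\to\{z\in\mathbb{C}:|z|=1\}$) of $G$, and $N^\perp=\{\chi\in\widehat{G}:\chi(h)=1\ \forall h\in N\}$. A subset $D\subseteq G$ with $|D|=k$ is an $(m,n,k,\lambda_1,\lambda_2)$-divisible difference set relative to $N$ (with $|G|=mn$, $|N|=n$) if the multiset $\{d-d': d,d'\in D,d\ne d'\}$ contains each element of $G\setminus N$ exactly $\lambda_2$ times and each element of $N\setminus\{0\}$ exactly $\lambda_1$ times; it is semiregular if $k>\lambda_1$ and $k^2=\lambda_2mn$. A collection of vectors is almost flat if all nonzero coordinates of all the vectors have the same modulus. *)

theory Defs
  imports Complex_Main
begin

definition add_subgroup :: "'a::ab_group_add set \<Rightarrow> bool" where
  "add_subgroup N \<longleftrightarrow> 0 \<in> N \<and> (\<forall>x\<in>N. \<forall>y\<in>N. x + y \<in> N) \<and> (\<forall>x\<in>N. - x \<in> N)"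

definition is_character :: "('a::ab_group_add \<Rightarrow> complex) \<Rightarrow> bool" where
  "is_character \<chi> \<longleftrightarrow> (\<forall>x y. \<chi> (x + y) = \<chi> x * \<chi> y) \<and> (\<forall>x. cmod (\<chi> x) = 1)"

definition char_perp :: "'a::ab_group_add set \<Rightarrow> ('a \<Rightarrow> complex) set" where
  "char_perp N = {\<chi>. is_character \<chi> \<and> (\<forall>h\<in>N. \<chi> h = 1)}"

definition diff_count :: "'a::ab_group_add set \<Rightarrow> 'a \<Rightarrow> nat" where
  "diff_count D g = card {(d, d'). d \<in> D \<and> d' \<in> D \<and> d \<noteq> d' \<and> d - d' = g}"

definition divisible_difference_set ::
  "nat \<Rightarrow> nat \<Rightarrow> nat \<Rightarrow> nat \<Rightarrow> nat \<Rightarrow> 'a::{ab_group_add,finite} set \<Rightarrow> 'a set \<Rightarrow> bool" where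
  "divisible_difference_set m n k l1 l2 N D \<longleftrightarrow>
     card (UNIV :: 'a set) = m * n \<and> add_subgroup N \<and> card N = n \<and> card D = k \<and>
     (\<forall>g. g \<notin> N \<longrightarrow> diff_count D g = l2) \<and>
     (\<forall>g\<in>N. g \<noteq> 0 \<longrightarrow> diff_count D g = l1)"

definition semiregular_dds ::
  "nat \<Rightarrow> nat \<Rightarrow> nat \<Rightarrow> nat \<Rightarrow> nat \<Rightarrow> 'a::{ab_group_add,finite} set \<Rightarrow> 'a set \<Rightarrow> bool" where
  "semiregular_dds m n k l1 l2 N D \<longleftrightarrow>
     divisible_difference_set m n k l1 l2 N D \<and> k > l1 \<and> k ^ 2 = l2 * m * n"

definition cspan_fam :: "nat \<Rightarrow> (nat \<Rightarrow> 'a \<Rightarrow> complex) \<Rightarrow> ('a \<Rightarrow> complex) set" where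
  "cspan_fam m v = {x. \<exists>c :: nat \<Rightarrow> complex. x = (\<lambda>g. \<Sum>j<m. c j * v j g)}"

definition almost_flat :: "'a set \<Rightarrow> ('a \<Rightarrow> complex) set \<Rightarrow> bool" where
  "almost_flat I V \<longleftrightarrow> (\<exists>r. \<forall>v\<in>V. \<forall>g\<in>I. v g \<noteq> 0 \<longrightarrow> cmod (v g) = r)"

end

theory Submission imports Defs begin

lemma char_zero: assumes "is_character c" shows "c 0 = 1"
proof -
  have "c 0 = c 0 * c 0" using assms unfolding is_character_def by (metis add_0)
  moreover have "c 0 \<noteq> 0" using assms unfolding is_character_def by (metis norm_zero zero_neq_one)
  ultimately show ?thesis by (metis mult_cancel_left1)
qed

lemma char_neg: assumes "is_character c" shows "c (-x) = cnj (c x)"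
proof -
  have "c (x + -x) = c x * c (-x)" using assms unfolding is_character_def by blast
  then have 1: "c x * c (-x) = 1" using char_zero[OF assms] by simp
  have 2: "c x * cnj (c x) = 1" using assms unfolding is_character_def
    by (metis complex_norm_square of_real_1 power_one)
  from 1 2 show ?thesis by (metis mult.commute mult.left_neutral mult.assoc)
qed

lemma char_diff: assumes "is_character c" shows "c (x - y) = c x * cnj (c y)"
  using assms char_neg[OF assms, of y] unfolding is_character_def by (metis diff_conv_add_uminus)

lemma char_sum0:
  fixes c :: "'a::{ab_group_add,finite} \<Rightarrow> complex"
  assumes "is_character c" "c y \<noteq> 1" shows "(\<Sum>x\<in>UNIV. c x) = 0"
proof -
  have "(\<Sum>x\<in>UNIV. c (x + y)) = (\<Sum>x\<in>UNIV. c x)"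
    by (rule sum.reindex_bij_witness[of _ "\<lambda>x. x - y" "\<lambda>x. x + y"]) auto
  moreover have "(\<Sum>x\<in>UNIV. c (x + y)) = (\<Sum>x\<in>UNIV. c x) * c y"
    using assms(1) unfolding is_character_def by (simp add: sum_distrib_right)
  ultimately have "(\<Sum>x\<in>UNIV. c x) * (c y - 1) = 0" by (simp add: algebra_simps)
  with assms(2) show ?thesis by simp
qed

lemma char_orth:
  fixes a b :: "'a::{ab_group_add,finite} \<Rightarrow> complex"
  assumes a: "is_character a" and b: "is_character b"
  shows "(\<Sum>x\<in>UNIV. a x * cnj (b x)) = (if a = b then of_nat (card (UNIV::'a set)) else 0)"
proof (cases "a = b")
  case True
  have "a x * cnj (a x) = 1" for x using a unfolding is_character_def
    by (metis complex_norm_square of_real_1 power_one)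
  then show ?thesis using True by simp
next
  case False
  then obtain y where y: "a y \<noteq> b y" by auto
  let ?f = "\<lambda>x. a x * cnj (b x)"
  have bb: "b x * cnj (b x) = 1" for x using b unfolding is_character_def
    by (metis complex_norm_square of_real_1 power_one)
  have ch: "is_character ?f" using a b unfolding is_character_def by (simp add: norm_mult)
  have "?f y \<noteq> 1"
  proof
    assume "?f y = 1"
    have "a y = a y * (b y * cnj (b y))" using bb[of y] by simp
    also have "\<dots> = (a y * cnj (b y)) * b y" by (simp add: ac_simps)
    also have "\<dots> = b y" using \<open>?f y = 1\<close> by simp
    finally have "a y = b y" .
    with y show False by simp
  qed
  then show ?thesis using char_sum0[OF ch] False by simp
qed


lemma span_sub:
  assumes "\<forall>j<m. \<forall>g. v j g = (\<Sum>a<m. M j a * w a g)"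
  shows "cspan_fam m v \<subseteq> cspan_fam m w"
proof
  fix x assume "x \<in> cspan_fam m v"
  then obtain c where c: "x = (\<lambda>g. \<Sum>j<m. c j * v j g)" unfolding cspan_fam_def by auto
  have "x = (\<lambda>g. \<Sum>a<m. (\<Sum>j<m. c j * M j a) * w a g)"
  proof
    fix g
    have "x g = (\<Sum>j<m. c j * (\<Sum>a<m. M j a * w a g))" using c assms by simp
    also have "\<dots> = (\<Sum>j<m. \<Sum>a<m. c j * M j a * w a g)" by (simp add: sum_distrib_left mult.assoc)
    also have "\<dots> = (\<Sum>a<m. \<Sum>j<m. c j * M j a * w a g)" by (rule sum.swap)
    also have "\<dots> = (\<Sum>a<m. (\<Sum>j<m. c j * M j a) * w a g)" by (simp add: sum_distrib_right)
    finally show "x g = (\<Sum>a<m. (\<Sum>j<m. c j * M j a) * w a g)" .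
  qed
  then show "x \<in> cspan_fam m w" unfolding cspan_fam_def
    by (intro CollectI exI[where x="\<lambda>a. \<Sum>j<m. c j * M j a"])
qed

lemma sq_avg:
  fixes x :: "nat \<Rightarrow> real"
  assumes s1: "(\<Sum>l<m. x l) = k" and s2: "real m * (\<Sum>l<m. (x l)^2) = k^2" and l: "l < m"
  shows "real m * x l = k"
proof -
  have "(\<Sum>l<m. (real m * x l - k)^2) = (real m)^2 * (\<Sum>l<m. (x l)^2) - 2 * real m * k * (\<Sum>l<m. x l) + real m * k^2"
    by (simp add: power2_eq_square algebra_simps sum.distrib sum_subtractf sum_distrib_left)
  also have "\<dots> = 0" using s1 s2 by (simp add: power2_eq_square algebra_simps)
  finally have "\<forall>l\<in>{..<m}. (real m * x l - k)^2 = 0"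
    by (subst sum_nonneg_eq_0_iff[symmetric]) auto
  then show ?thesis using l by simp
qed


theorem mainTheorem2:
  fixes N D :: "'a::{ab_group_add,finite} set"
    and m n k l1 l2 :: nat
    and \<eta> \<chi> :: "nat \<Rightarrow> 'a \<Rightarrow> complex"
    and h :: "nat \<Rightarrow> 'a"
    and e et :: "nat \<Rightarrow> nat \<Rightarrow> 'a \<Rightarrow> complex"
  assumes dds: "semiregular_dds m n k l1 l2 N D"
    and eta: "bij_betw \<eta> {..<m} (char_perp N)"
    and chi_char: "\<forall>i<n. is_character (\<chi> i)"
    and chi_reps: "\<forall>\<psi>. is_character \<psi> \<longrightarrow>
                     (\<exists>!i. i < n \<and> (\<lambda>g. \<psi> g * cnj (\<chi> i g)) \<in> char_perp N)"
    and h_reps: "\<forall>g. \<exists>!l. l < m \<and> g - h l \<in> N"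
    and e_def: "\<forall>i j. e i j = (\<lambda>g. if g \<in> D then \<chi> i g * \<eta> j g / complex_of_real (sqrt (real k)) else 0)"
    and et_def: "\<forall>i j. et i j = (\<lambda>g. \<Sum>a<m. e i a g * cnj (\<eta> a (h j)) / complex_of_real (sqrt (real m)))"
  shows "(\<forall>i<n. cspan_fam m (e i) = cspan_fam m (et i))
         \<and> almost_flat D {et i j | i j. i < n \<and> j < m}
         \<and> (\<forall>i<n. \<forall>j<m. real (card {g\<in>D. et i j g \<noteq> 0}) = real k / real m)"
proof -
  from dds have cardU: "card (UNIV::'a set) = m*n" and sub: "add_subgroup N" and cN: "card N = n"
    and cD: "card D = k" and l2c: "\<forall>g. g \<notin> N \<longrightarrow> diff_count D g = l2" and kl: "k > l1"
    and ksq: "k^2 = l2*m*n"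
    unfolding semiregular_dds_def divisible_difference_set_def by auto
  have "card (UNIV::'a set) > 0" by (simp add: card_gt_0_iff)
  then have mpos: "m > 0" and npos: "n > 0" using cardU by auto
  have kpos: "k > 0" using kl by simp
  have N0: "0 \<in> N" and Nadd: "\<And>x y. x \<in> N \<Longrightarrow> y \<in> N \<Longrightarrow> x + y \<in> N"
    and Nneg: "\<And>x. x \<in> N \<Longrightarrow> -x \<in> N" using sub unfolding add_subgroup_def by auto
  have Ndiff: "\<And>x y. x \<in> N \<Longrightarrow> y \<in> N \<Longrightarrow> x - y \<in> N"
    using Nadd Nneg by (metis diff_conv_add_uminus)
  have etachar: "is_character (\<eta> a)" if "a < m" for a
    using bij_betwE[OF eta] that unfolding char_perp_def by auto
  have etaN: "\<eta> a x = 1" if "a < m" "x \<in> N" for a x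
    using bij_betwE[OF eta] that unfolding char_perp_def by auto
  have etainj: "inj_on \<eta> {..<m}" using eta bij_betw_def by blast
  have orth: "(\<Sum>x\<in>UNIV. \<eta> a x * cnj (\<eta> b x)) = (if a = b then of_nat (m*n) else 0)"
    if "a < m" "b < m" for a b
    using char_orth[OF etachar[OF that(1)] etachar[OF that(2)]] etainj that cardU
    by (auto simp: inj_on_def)
  define S where "S x = (\<Sum>a<m. \<eta> a x)" for x
  have SN: "S x = of_nat m" if "x \<in> N" for x
    using etaN that unfolding S_def by simp
  have Sout: "S x = 0" if "x \<notin> N" for x
  proof -
    define R where "R x = (cmod (S x))^2" for x
    have RS: "complex_of_real (R x) = S x * cnj (S x)" for x
      unfolding R_def by (rule complex_norm_square)
    have "S x * cnj (S x) = (\<Sum>a<m. \<Sum>b<m. \<eta> a x * cnj (\<eta> b x))" for x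
      unfolding S_def cnj_sum by (rule sum_product)
    then have "(\<Sum>x\<in>UNIV. S x * cnj (S x)) = (\<Sum>x\<in>UNIV. \<Sum>a<m. \<Sum>b<m. \<eta> a x * cnj (\<eta> b x))"
      by simp
    also have "\<dots> = (\<Sum>a<m. \<Sum>x\<in>UNIV. \<Sum>b<m. \<eta> a x * cnj (\<eta> b x))" by (rule sum.swap)
    also have "\<dots> = (\<Sum>a<m. \<Sum>b<m. \<Sum>x\<in>UNIV. \<eta> a x * cnj (\<eta> b x))"
      by (rule sum.cong, simp, rule sum.swap)
    also have "\<dots> = (\<Sum>a<m. \<Sum>b<m. if a = b then of_nat (m*n) else 0)"
      using orth by simp
    also have "\<dots> = of_nat (m * (m * n))" by simp
    finally have "complex_of_real (\<Sum>x\<in>UNIV. R x) = of_nat (m * (m * n))"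
      by (simp add: RS)
    then have tot: "(\<Sum>x\<in>UNIV. R x) = real m * real m * real n"
      by (metis of_real_eq_iff of_real_of_nat_eq of_nat_mult mult.assoc)
    have "(\<Sum>x\<in>N. R x) = (\<Sum>x\<in>N. real m * real m)"
      by (rule sum.cong) (auto simp: R_def SN power2_eq_square)
    then have totN: "(\<Sum>x\<in>N. R x) = real m * real m * real n" using cN by simp
    have "(\<Sum>x\<in>UNIV. R x) = (\<Sum>x\<in>N. R x) + (\<Sum>x\<in>UNIV - N. R x)"
      by (metis add.commute finite sum.subset_diff subset_UNIV)
    then have "(\<Sum>x\<in>UNIV - N. R x) = 0" using tot totN by simp
    then have "\<forall>x\<in>UNIV - N. R x = 0"
      by (subst sum_nonneg_eq_0_iff[symmetric]) (auto simp: R_def)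
    then show ?thesis using that unfolding R_def by simp
  qed
  define sk where "sk = complex_of_real (sqrt (real k))"
  define sm where "sm = complex_of_real (sqrt (real m))"
  have sk0: "sk \<noteq> 0" and sm0: "sm \<noteq> 0" using kpos mpos unfolding sk_def sm_def by auto
  have smsm: "sm * sm = of_nat m" unfolding sm_def
    by (metis of_real_mult real_sqrt_mult_self abs_of_nat of_real_of_nat_eq)
  define cst where "cst = of_nat m / (sk * sm)"
  have cst0: "cst \<noteq> 0" using sk0 sm0 mpos unfolding cst_def by simp
  have etform: "et i j g = (if g \<in> D \<and> g - h j \<in> N then \<chi> i g * cst else 0)" for i j g
  proof (cases "g \<in> D")
    case False
    then show ?thesis using et_def e_def by simp
  next
    case True
    have "et i j g = (\<Sum>a<m. \<chi> i g / (sk * sm) * (\<eta> a g * cnj (\<eta> a (h j))))"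
      using et_def e_def True unfolding sk_def sm_def by (simp add: field_simps)
    also have "\<dots> = (\<Sum>a<m. \<chi> i g / (sk * sm) * \<eta> a (g - h j))"
      by (rule sum.cong) (auto simp: char_diff[OF etachar])
    also have "\<dots> = \<chi> i g / (sk * sm) * S (g - h j)"
      unfolding S_def by (simp add: sum_distrib_left)
    finally show ?thesis using True SN Sout unfolding cst_def by auto
  qed
  have span: "cspan_fam m (e i) = cspan_fam m (et i)" for i
  proof
    show "cspan_fam m (et i) \<subseteq> cspan_fam m (e i)"
      by (rule span_sub[where M="\<lambda>j a. cnj (\<eta> a (h j)) / sm"])
         (simp add: et_def sm_def mult.commute)
    show "cspan_fam m (e i) \<subseteq> cspan_fam m (et i)"
    proof (rule span_sub[where M="\<lambda>a j. \<eta> a (h j) / sm"], intro allI impI)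
      fix a g assume a: "a < m"
      show "e i a g = (\<Sum>j<m. \<eta> a (h j) / sm * et i j g)"
      proof (cases "g \<in> D")
        case False
        then show ?thesis using e_def etform by simp
      next
        case True
        obtain j0 where j0: "j0 < m" "g - h j0 \<in> N" and uq: "\<And>l. l < m \<Longrightarrow> g - h l \<in> N \<Longrightarrow> l = j0"
        proof -
          have "\<exists>!l. l < m \<and> g - h l \<in> N" using h_reps by blast
          then show ?thesis using that by blast
        qed
        have "(\<Sum>j<m. \<eta> a (h j) / sm * et i j g)
            = (\<Sum>j<m. if j = j0 then \<eta> a (h j) / sm * (\<chi> i g * cst) else 0)"
          by (rule sum.cong) (auto simp: etform True j0 dest: uq)
        also have "\<dots> = \<eta> a (h j0) / sm * (\<chi> i g * cst)" using j0 by simp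
        also have "\<eta> a (h j0) = \<eta> a g"
        proof -
          have "\<eta> a (h j0 + (g - h j0)) = \<eta> a (h j0) * \<eta> a (g - h j0)"
            using etachar[OF a] unfolding is_character_def by blast
          then show ?thesis using etaN[OF a j0(2)] by simp
        qed
        finally show ?thesis using True e_def sk0 sm0 smsm mpos unfolding cst_def sk_def[symmetric]
          by (simp add: field_simps)
      qed
    qed
  qed
  define A where "A l = {g\<in>D. g - h l \<in> N}" for l
  have card_et: "{g\<in>D. et i j g \<noteq> 0} = A j" if "i < n" for i j
  proof -
    have "\<chi> i g \<noteq> 0" for g using chi_char that unfolding is_character_def
      by (metis norm_zero zero_neq_one)
    then show ?thesis unfolding A_def using etform cst0 by auto
  qed
  have flat: "almost_flat D {et i j | i j. i < n \<and> j < m}"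
    unfolding almost_flat_def
  proof (intro exI[where x="cmod cst"] ballI impI)
    fix v g assume v: "v \<in> {et i j | i j. i < n \<and> j < m}" and "g \<in> D" "v g \<noteq> 0"
    then obtain i j where ij: "v = et i j" "i < n" by auto
    then have "v g = \<chi> i g * cst" using etform \<open>v g \<noteq> 0\<close> by (auto split: if_splits)
    then show "cmod (v g) = cmod cst" using chi_char ij unfolding is_character_def
      by (simp add: norm_mult)
  qed
  have finA: "finite (A l)" for l by simp
  have Adisj: "A l \<inter> A l' = {}" if "l < m" "l' < m" "l \<noteq> l'" for l l'
    using h_reps that unfolding A_def by blast
  have Acov: "\<exists>l<m. g \<in> A l" if "g \<in> D" for g
    using h_reps that unfolding A_def by blast
  have DU: "D = (\<Union>l\<in>{..<m}. A l)" using Acov unfolding A_def by blast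
  have sum1: "(\<Sum>l<m. card (A l)) = k"
    using card_UN_disjoint[of "{..<m}" A] Adisj DU cD by auto
  define Q where "Q = {p\<in>D \<times> D. fst p - snd p \<in> N}"
  define Q' where "Q' = {p\<in>D \<times> D. fst p - snd p \<notin> N}"
  have QU: "Q = (\<Union>l\<in>{..<m}. A l \<times> A l)"
  proof
    show "Q \<subseteq> (\<Union>l\<in>{..<m}. A l \<times> A l)"
    proof
      fix p assume "p \<in> Q"
      then obtain d d' where p: "p = (d, d')" "d \<in> D" "d' \<in> D" "d - d' \<in> N" unfolding Q_def by auto
      obtain l where l: "l < m" "d \<in> A l" using Acov p by blast
      have eq: "d' - h l = (d - h l) - (d - d')" by simp
      have "d - h l \<in> N" using l unfolding A_def by auto
      then have "(d - h l) - (d - d') \<in> N" using Ndiff p(4) by blast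
      then have "d' - h l \<in> N" by (simp only: eq)
      then show "p \<in> (\<Union>l\<in>{..<m}. A l \<times> A l)" using l p unfolding A_def by auto
    qed
    show "(\<Union>l\<in>{..<m}. A l \<times> A l) \<subseteq> Q"
    proof
      fix p assume "p \<in> (\<Union>l\<in>{..<m}. A l \<times> A l)"
      then obtain l d d' where p: "p = (d, d')" "d \<in> A l" "d' \<in> A l" by auto
      have eq: "d - d' = (d - h l) - (d' - h l)" by simp
      have "d - h l \<in> N" "d' - h l \<in> N" using p unfolding A_def by auto
      then have "(d - h l) - (d' - h l) \<in> N" using Ndiff by blast
      then have "d - d' \<in> N" by (simp only: eq)
      then show "p \<in> Q" using p unfolding Q_def A_def by auto
    qed
  qed
  have sum2: "card Q = (\<Sum>l<m. card (A l) * card (A l))"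
    unfolding QU by (subst card_UN_disjoint) (use Adisj in \<open>auto simp: card_cartesian_product\<close>)
  have DD: "D \<times> D = Q \<union> Q'" "Q \<inter> Q' = {}" unfolding Q_def Q'_def by auto
  have cardDD: "k * k = card Q + card Q'"
  proof -
    have "card (D \<times> D) = k * k" using cD by (simp add: card_cartesian_product)
    then show ?thesis using card_Un_disjoint[of Q Q'] DD by simp
  qed
  have Q'U: "Q' = (\<Union>g\<in>UNIV - N. {(d, d'). d \<in> D \<and> d' \<in> D \<and> d \<noteq> d' \<and> d - d' = g})"
    unfolding Q'_def using N0 by auto
  have "card Q' = (\<Sum>g\<in>UNIV - N. diff_count D g)"
    unfolding Q'U diff_count_def by (subst card_UN_disjoint) auto
  also have "\<dots> = (\<Sum>g\<in>UNIV - N. l2)" using l2c by simp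
  also have "\<dots> = (m * n - n) * l2" using cardU cN by (simp add: card_Diff_subset)
  finally have cQ': "card Q' = (m * n - n) * l2" .
  have nle: "n \<le> m * n" using mpos by simp
  have "real k * real k = real (card Q) + (real m * real n - real n) * real l2"
    using cardDD cQ' nle by (metis of_nat_add of_nat_mult of_nat_diff)
  then have s2': "(\<Sum>l<m. real (card (A l)) ^ 2) = real k * real k - (real m * real n - real n) * real l2"
    using sum2 by (simp add: power2_eq_square)
  have ksqr: "real k * real k = real l2 * real m * real n"
    using ksq by (metis of_nat_mult power2_eq_square)
  have s2: "real m * (\<Sum>l<m. real (card (A l)) ^ 2) = (real k) ^ 2"
    unfolding s2' using ksqr by (simp add: power2_eq_square algebra_simps)
  have s1: "(\<Sum>l<m. real (card (A l))) = real k" using sum1 by (metis of_nat_sum)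
  have cardA: "real (card (A l)) = real k / real m" if "l < m" for l
    using sq_avg[OF s1 s2 that] mpos by (simp add: field_simps)
  show ?thesis using span flat cardA card_et by auto
qed

end
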